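(* Let $k\ge1$, $n=2k-1$, $T^n=(\mathbb{R}/k\mathbb{Z})^n$, let $X_0=\{\mathbf{x}_\sigma:\mathbf{x}\in[0,1]^2\times[0,2]^2\times\cdots\times[0,k-1]^2\times[0,k],\ \sigma\in S_n\}\subset T^n$ and $X_i=X_0+(i,\dots,i)$ for $i\in\mathbb{Z}_k$. Then $X_0\cup X_1\cup\cdots\cup X_{k-1}=T^n$.
   Context: $\mathbf{x}_\sigma=(x_{\sigma(1)},\dots,x_{\sigma(n)})$ for $\sigma\in S_n$; $[0,j]^2$ denotes two Cartesian factors equal to $[0,j]$, so the product has $n$ factors; products of real intervals are regarded as subsets of $T^n$ via the quotient map $\mathbb{R}^n\to(\mathbb{R}/k\mathbb{Z})^n$; $X_0+(i,\dots,i)=\{\mathbf{x}+(i,\dots,i):\mathbf{x}\in X_0\}$. *)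

theory Defs
  imports Complex_Main "HOL-Combinatorics.Permutations"
begin

text \<open>Points of T^n = (R/kZ)^n are represented by real vectors (functions on {0..<n},
  values outside irrelevant); two vectors represent the same point iff they agree
  coordinatewise modulo k.\<close>

definition torus_eq :: "nat \<Rightarrow> nat \<Rightarrow> (nat \<Rightarrow> real) \<Rightarrow> (nat \<Rightarrow> real) \<Rightarrow> bool" where
  "torus_eq k n y z \<longleftrightarrow> (\<forall>j<n. \<exists>m::int. y j - z j = real_of_int m * real k)"

text \<open>The box [0,1]^2 x [0,2]^2 x ... x [0,k-1]^2 x [0,k] (0-based coordinate j has
  upper bound j div 2 + 1), with n = 2k-1 coordinates.\<close>

definition box :: "nat \<Rightarrow> (nat \<Rightarrow> real) set" where
  "box k = {x. \<forall>j<2*k-1. 0 \<le> x j \<and> x j \<le> real (j div 2 + 1)}"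

definition X0 :: "nat \<Rightarrow> (nat \<Rightarrow> real) set" where
  "X0 k = {(\<lambda>j. x (\<sigma> j)) | x \<sigma>. x \<in> box k \<and> \<sigma> permutes {..<2*k-1}}"

definition Xi :: "nat \<Rightarrow> nat \<Rightarrow> (nat \<Rightarrow> real) set" where
  "Xi k i = {(\<lambda>j. x j + real i) | x. x \<in> X0 k}"

end

theory Submission
  imports Defs
begin

lemma cycle:
  fixes N :: "nat \<Rightarrow> nat" and k :: nat
  assumes k1: "k \<ge> 1" and tot: "(\<Sum>s<k. N s) = 2*k - 1" and per: "\<And>s. N (s+k) = N s"
  shows "\<exists>i<k. \<forall>t. 1 \<le> t \<and> t < k \<longrightarrow> 2*t \<le> (\<Sum>s<t. N (i+s))"
proof -
  define f where "f s = int (N s) - 2" for s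
  define P where "P m = (\<Sum>s<m. f s)" for m
  have Pk: "P k = -1"
  proof -
    have "P k = (\<Sum>s<k. int (N s)) - 2 * int k" unfolding P_def f_def by (simp add: sum_subtractf)
    also have "(\<Sum>s<k. int (N s)) = int (2*k-1)" by (metis tot of_nat_sum)
    finally show ?thesis using k1 by simp
  qed
  have Pper: "P (m + k) = P m - 1" for m
  proof (induction m)
    case 0 then show ?case using Pk by (simp add: P_def)
  next
    case (Suc m)
    have "P (Suc m + k) = P (m+k) + f (m+k)" by (simp add: P_def)
    also have "f (m+k) = f m" using per by (simp add: f_def)
    finally show ?case using Suc by (simp add: P_def)
  qed
  have Pshift: "(\<Sum>s<t. f (i+s)) = P (i+t) - P i" for i t
    by (induction t) (auto simp: P_def)
  define \<mu> where "\<mu> = Min (P ` {..<k})"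
  have fin: "finite (P ` {..<k})" "P ` {..<k} \<noteq> {}" using k1 by (auto simp: lessThan_empty_iff)
  have minle: "\<mu> \<le> P j" if "j < k" for j using fin that unfolding \<mu>_def by auto
  obtain i0 where i0: "i0 < k" "P i0 = \<mu>" using Min_in[OF fin] unfolding \<mu>_def by auto
  define i where "i = (LEAST i. i < k \<and> P i = \<mu>)"
  have i: "i < k" "P i = \<mu>" using LeastI[of "\<lambda>i. i < k \<and> P i = \<mu>", OF conjI[OF i0]] unfolding i_def by auto
  have below: "P j > \<mu>" if "j < i" for j
  proof -
    have "\<not> (j < k \<and> P j = \<mu>)" using not_less_Least[of j "\<lambda>i. i < k \<and> P i = \<mu>"] that unfolding i_def by blast
    moreover have "j < k" using that i by simp
    ultimately show ?thesis using minle[of j] by auto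
  qed
  show ?thesis
  proof (intro exI[of _ i] conjI allI impI)
    show "i < k" by (rule i)
    fix t assume t: "1 \<le> t \<and> t < k"
    have "P i \<le> P (i+t)"
    proof (cases "i + t < k")
      case True then show ?thesis using minle i by simp
    next
      case False
      define j where "j = i + t - k"
      have "i + t = j + k" "j < i" using False t unfolding j_def by auto
      then show ?thesis using Pper[of j] below[of j] i by simp
    qed
    then have "0 \<le> (\<Sum>s<t. f (i+s))" using Pshift by simp
    also have "(\<Sum>s<t. f (i+s)) = int (\<Sum>s<t. N (i+s)) - 2 * int t"
      unfolding f_def by (simp add: sum_subtractf of_nat_sum)
    finally have "int (2*t) \<le> int (\<Sum>s<t. N (i+s))" by simp
    then show "2*t \<le> (\<Sum>s<t. N (i+s))" by (simp only: of_nat_le_iff)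
  qed
qed

lemma count:
  fixes c :: "nat \<Rightarrow> int" and k n i t :: nat
  assumes c: "\<And>j. j < n \<Longrightarrow> 0 \<le> c j \<and> c j < int k" and tk: "t \<le> k"
  shows "card {j. j < n \<and> (c j - int i) mod int k < int t} = (\<Sum>s<t. card {j. j < n \<and> c j = int ((i+s) mod k)})"
  using tk
proof (induction t)
  case 0
  have "(c j - int i) mod int k \<ge> 0" if "j < n" for j using c[OF that] by simp
  then have "{j. j < n \<and> (c j - int i) mod int k < 0} = {}" by force
  then show ?case by simp
next
  case (Suc t)
  have key: "(c j - int i) mod int k = int t \<longleftrightarrow> c j = int ((i+t) mod k)" if j: "j < n" for j
  proof -
    have kp: "k > 0" using Suc.prems by simp
    have "(c j - int i) mod int k = int t \<longleftrightarrow> (c j - int i) mod int k = int t mod int k"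
      using Suc.prems by simp
    also have "\<dots> \<longleftrightarrow> int k dvd (c j - int i - int t)" by (rule mod_eq_dvd_iff)
    also have "\<dots> \<longleftrightarrow> c j mod int k = (int i + int t) mod int k" by (simp add: mod_eq_dvd_iff algebra_simps)
    also have "c j mod int k = c j" using c[OF j] by simp
    also have "(int i + int t) mod int k = int ((i+t) mod k)" by (simp add: zmod_int)
    finally show ?thesis .
  qed
  have "{j. j < n \<and> (c j - int i) mod int k < int (Suc t)} =
        {j. j < n \<and> (c j - int i) mod int k < int t} \<union> {j. j < n \<and> c j = int ((i+t) mod k)}"
    using key by force
  moreover have "{j. j < n \<and> (c j - int i) mod int k < int t} \<inter> {j. j < n \<and> c j = int ((i+t) mod k)} = {}"
    using key by force
  ultimately have "card {j. j < n \<and> (c j - int i) mod int k < int (Suc t)} =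
     card {j. j < n \<and> (c j - int i) mod int k < int t} + card {j. j < n \<and> c j = int ((i+t) mod k)}"
    by (simp add: card_Un_disjoint)
  then show ?case using Suc by simp
qed


lemma sorting:
  fixes w :: "nat \<Rightarrow> real" and k n :: nat
  assumes w: "\<And>j. j < n \<Longrightarrow> 0 \<le> w j \<and> w j < real k" and n: "n = 2*k-1"
    and cnt: "\<And>t. 1 \<le> t \<Longrightarrow> t < k \<Longrightarrow> 2*t \<le> card {j. j < n \<and> w j < real t}"
  shows "\<exists>\<pi>. \<pi> permutes {..<n} \<and> (\<forall>m<n. w (\<pi> m) \<le> real (m div 2 + 1))"
proof -
  define L where "L = sort_key w [0..<n]"
  have Lset: "set L = {..<n}" and Ldist: "distinct L" and Llen: "length L = n"
    unfolding L_def by (auto simp: length_sort)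
  have Lsort: "sorted (map w L)" unfolding L_def by simp
  define \<pi> where "\<pi> m = (if m < n then L ! m else m)" for m
  have bij: "bij_betw ((!) L) {..<n} {..<n}"
    using bij_betw_nth[OF Ldist] Lset Llen by auto
  have "bij_betw \<pi> {..<n} {..<n}"
    using bij by (rule bij_betw_cong[THEN iffD1, rotated]) (auto simp: \<pi>_def)
  then have perm: "\<pi> permutes {..<n}"
    by (rule bij_imp_permutes) (auto simp: \<pi>_def)
  have mono: "w (\<pi> m) \<le> w (\<pi> m')" if "m \<le> m'" "m' < n" for m m'
    using sorted_nth_mono[OF Lsort that(1)] that Llen by (simp add: \<pi>_def)
  have pin: "\<pi> m < n" if "m < n" for m using permutes_in_image[OF perm, of m] that
    by simp
  have bound: "w (\<pi> m) \<le> real (m div 2 + 1)" if m: "m < n" for m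
  proof (rule ccontr)
    assume "\<not> ?thesis"
    then have gt: "w (\<pi> m) > real (m div 2 + 1)" by simp
    define t where "t = m div 2 + 1"
    have "w (\<pi> m) < real k" using w pin m by blast
    then have tk: "t < k" using gt unfolding t_def by linarith
    have sub: "{j. j < n \<and> w j < real t} \<subseteq> \<pi> ` {..<m}"
    proof
      fix j assume j: "j \<in> {j. j < n \<and> w j < real t}"
      then have "j \<in> \<pi> ` {..<n}" using permutes_image[OF perm] by auto
      then obtain m' where m': "m' < n" "j = \<pi> m'" by auto
      have "m' < m"
      proof (rule ccontr)
        assume "\<not> m' < m"
        then have "w (\<pi> m) \<le> w j" using mono m' by auto
        then show False using j gt unfolding t_def by auto
      qed
      then show "j \<in> \<pi> ` {..<m}" using m' by auto
    qed
    have "card {j. j < n \<and> w j < real t} \<le> card (\<pi> ` {..<m})"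
      by (rule card_mono[OF _ sub]) auto
    also have "\<dots> \<le> m" using card_image_le[of "{..<m}" \<pi>] by simp
    finally have "card {j. j < n \<and> w j < real t} \<le> m" .
    moreover have "2*t \<le> card {j. j < n \<and> w j < real t}" using cnt[of t] tk unfolding t_def by simp
    ultimately show False unfolding t_def by presburger
  qed
  show ?thesis using perm bound by blast
qed


theorem lemmaL:
  fixes k :: nat
  assumes "k \<ge> 1"
  shows "\<forall>y :: nat \<Rightarrow> real. \<exists>i<k. \<exists>z \<in> Xi k i. torus_eq k (2*k-1) y z"
proof
  fix y :: "nat \<Rightarrow> real"
  define n where "n = 2*k-1"
  have kp: "k > 0" using assms by simp
  define c where "c j = \<lfloor>y j\<rfloor> mod int k" for j
  have c: "0 \<le> c j \<and> c j < int k" for j unfolding c_def using kp by simp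
  define N where "N s = card {j. j < n \<and> c j = int (s mod k)}" for s
  have "card {j. j < n \<and> (c j - int 0) mod int k < int k} = (\<Sum>s<k. N s)"
  proof -
    have "card {j. j < n \<and> (c j - int 0) mod int k < int k} = (\<Sum>s<k. card {j. j < n \<and> c j = int ((0+s) mod k)})"
      by (rule count) (use c in auto)
    then show ?thesis unfolding N_def by (simp only: add_0)
  qed
  moreover have "{j. j < n \<and> (c j - int 0) mod int k < int k} = {..<n}" using kp by auto
  ultimately have tot: "(\<Sum>s<k. N s) = 2*k-1" unfolding n_def by simp
  have per: "N (s+k) = N s" for s unfolding N_def by simp
  obtain i where i: "i < k" and cyc: "\<And>t. 1 \<le> t \<Longrightarrow> t < k \<Longrightarrow> 2*t \<le> (\<Sum>s<t. N (i+s))"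
    using cycle[OF assms tot per] by blast
  define q where "q j = \<lfloor>(y j - real i) / real k\<rfloor>" for j
  define w where "w j = y j - real i - real k * of_int (q j)" for j
  have w: "0 \<le> w j \<and> w j < real k" for j
  proof -
    have "of_int (q j) \<le> (y j - real i) / real k" "(y j - real i) / real k < of_int (q j) + 1"
      unfolding q_def by linarith+
    then have "real k * of_int (q j) \<le> y j - real i" "y j - real i < real k * of_int (q j) + real k"
      using kp by (simp_all add: field_simps)
    then show ?thesis unfolding w_def by simp
  qed
  have fw: "\<lfloor>w j\<rfloor> = (c j - int i) mod int k" for j
  proof -
    have "w j = y j - of_int (int i + int k * q j)" unfolding w_def by simp
    then have "\<lfloor>w j\<rfloor> = \<lfloor>y j\<rfloor> - (int i + int k * q j)" by (simp only: floor_diff_of_int)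
    then have "\<lfloor>w j\<rfloor> = \<lfloor>y j\<rfloor> - int i - int k * q j" by simp
    moreover have "0 \<le> \<lfloor>w j\<rfloor>" "\<lfloor>w j\<rfloor> < int k" using w[of j] by (auto simp: floor_less_iff)
    ultimately have "\<lfloor>w j\<rfloor> = (\<lfloor>y j\<rfloor> - int i) mod int k"
    proof -
      assume e: "\<lfloor>w j\<rfloor> = \<lfloor>y j\<rfloor> - int i - int k * q j" and b: "0 \<le> \<lfloor>w j\<rfloor>" "\<lfloor>w j\<rfloor> < int k"
      have "\<lfloor>w j\<rfloor> = \<lfloor>w j\<rfloor> mod int k" using b by simp
      also have "\<lfloor>w j\<rfloor> mod int k = (\<lfloor>y j\<rfloor> - int i + int k * (- q j)) mod int k" using e by simp
      also have "\<dots> = (\<lfloor>y j\<rfloor> - int i) mod int k" by (rule mod_mult_self2)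
      finally show ?thesis .
    qed
    then show ?thesis unfolding c_def by (simp add: mod_diff_left_eq)
  qed
  have cnt: "2*t \<le> card {j. j < n \<and> w j < real t}" if t: "1 \<le> t" "t < k" for t
  proof -
    have "2*t \<le> (\<Sum>s<t. N (i+s))" using cyc t by blast
    also have "\<dots> = card {j. j < n \<and> (c j - int i) mod int k < int t}"
      unfolding N_def by (rule count[symmetric]) (use c t in auto)
    also have "\<dots> \<le> card {j. j < n \<and> w j < real t}"
    proof (rule card_mono)
      show "finite {j. j < n \<and> w j < real t}" by simp
      show "{j. j < n \<and> (c j - int i) mod int k < int t} \<subseteq> {j. j < n \<and> w j < real t}"
        using fw by (auto, metis floor_less_iff of_int_of_nat_eq)
    qed
    finally show ?thesis .
  qed
  obtain \<pi> where perm: "\<pi> permutes {..<n}" and bd: "\<And>m. m < n \<Longrightarrow> w (\<pi> m) \<le> real (m div 2 + 1)"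
    using sorting[of n w k] w n_def cnt by blast
  define x where "x m = w (\<pi> m)" for m
  define \<sigma> where "\<sigma> = inv \<pi>"
  have sperm: "\<sigma> permutes {..<n}" unfolding \<sigma>_def using perm by (rule permutes_inv)
  have xs: "x (\<sigma> j) = w j" for j unfolding x_def \<sigma>_def using permutes_inverses(1)[OF perm] by simp
  have xbox: "x \<in> box k" unfolding box_def x_def using bd w n_def by auto
  define z where "z j = x (\<sigma> j) + real i" for j
  have "(\<lambda>j. x (\<sigma> j)) \<in> X0 k" unfolding X0_def using xbox sperm n_def by blast
  then have zX: "z \<in> Xi k i" unfolding Xi_def z_def
    by (intro CollectI exI[of _ "\<lambda>j. x (\<sigma> j)"]) simp
  have "torus_eq k (2*k-1) y z" unfolding torus_eq_def
  proof (intro allI impI)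
    fix j show "\<exists>m::int. y j - z j = real_of_int m * real k"
      by (rule exI[of _ "q j"]) (simp add: z_def xs w_def)
  qed
  then show "\<exists>i<k. \<exists>z \<in> Xi k i. torus_eq k (2*k-1) y z" using i zX by blast
qed

end
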